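(* Let $p$ be an odd prime and let $0<r,s<p$ be integers with $r+s\neq p$. Then \[ b_{r,s}(\alpha)=\sum_{k=0}^{p-1}(-r/s)^k\binom{r\alpha-1}{p-1-k}\binom{s\alpha}{k} \] in $\mathbb F_p[\alpha]$.
   Context: $\mathbb F_p$ is the field of $p$ elements, $\alpha$ an indeterminate, $\binom{x}{m}=x(x-1)\cdots(x-m+1)/m!$. For integers $0<r,s<p$ (interpreted as elements of $\mathbb F_p$), $b_{r,s}(\alpha)$ is defined as $b_{r,s}(\alpha)=\sum_{k=0}^{p-1}(-r/s)^k\binom{r\alpha-1}{p-1-k}\binom{s\alpha-1}{k}\in\mathbb F_p[\alpha]$. *)

theory Defs
  imports "Berlekamp_Zassenhaus.Finite_Field" "HOL-Computational_Algebra.Polynomial"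
begin

text \<open>F_p is modelled as the type 'p mod_ring with CARD('p) = p prime; the
indeterminate alpha is the polynomial variable [:0,1:].\<close>

definition pbinom :: "'a::field poly \<Rightarrow> nat \<Rightarrow> 'a poly" where
  "pbinom x m = smult (inverse (of_nat (fact m))) (\<Prod>i<m. x - of_nat i)"

definition b_rs :: "nat \<Rightarrow> nat \<Rightarrow> 'p::prime_card mod_ring poly" where
  "b_rs r s = (\<Sum>k = 0..CARD('p) - 1.
      [:(- (of_nat r / of_nat s)) ^ k:]
      * pbinom (smult (of_nat r) [:0, 1:] - 1) (CARD('p) - 1 - k)
      * pbinom (smult (of_nat s) [:0, 1:] - 1) k)"

end

theory Submission imports Defs "Berlekamp_Zassenhaus.Berlekamp_Type_Based" begin
definition ff :: "'a::comm_ring_1 \<Rightarrow> nat \<Rightarrow> 'a" where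
  "ff x n = (\<Prod>i<n. x - of_nat i)"

lemma ff_0[simp]: "ff x 0 = 1" by (simp add: ff_def)

lemma ff_Suc: "ff x (Suc n) = x * ff (x - 1) n"
  unfolding ff_def prod.lessThan_Suc_shift by (simp add: algebra_simps)

lemma ff_Suc2: "ff x (Suc n) = ff x n * (x - of_nat n)"
  unfolding ff_def by simp

lemma ff_plus1: "ff (x + 1) n = ff x n + of_nat n * ff x (n - 1)"
proof (cases n)
  case 0 then show ?thesis by simp
next
  case (Suc m)
  have "ff (x+1) (Suc m) = (x+1) * ff x m" by (simp add: ff_Suc)
  also have "\<dots> = ff x m * (x - of_nat m) + of_nat (Suc m) * ff x m" by (simp add: algebra_simps)
  finally show ?thesis using Suc by (simp add: ff_Suc2)
qed

definition conv :: "(nat \<Rightarrow> 'a::comm_ring_1) \<Rightarrow> (nat \<Rightarrow> 'a) \<Rightarrow> nat \<Rightarrow> 'a" where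
  "conv a b n = (\<Sum>j\<le>n. of_nat (n choose j) * a (n - j) * b j)"

lemma conv_comm: "conv a b n = conv b a n"
proof -
  have "conv a b n = (\<Sum>j=0..n. of_nat (n choose j) * a (n - j) * b j)"
    by (simp add: conv_def atLeast0AtMost)
  also have "\<dots> = (\<Sum>j=0..n. of_nat (n choose (n - j)) * a (n - (n - j)) * b (n - j))"
    by (subst sum.atLeastAtMost_rev) simp
  also have "\<dots> = (\<Sum>j=0..n. of_nat (n choose j) * b (n - j) * a j)"
    by (intro sum.cong refl) (auto simp: binomial_symmetric[symmetric] algebra_simps)
  finally show ?thesis by (simp add: conv_def atLeast0AtMost)
qed

lemma conv_smult1: "conv (\<lambda>k. u * a k) b n = u * conv a b n"
  by (simp add: conv_def sum_distrib_left algebra_simps)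

lemma conv_smult2: "conv a (\<lambda>k. u * b k) n = u * conv a b n"
  by (simp add: conv_def sum_distrib_left algebra_simps)

lemma conv_add1: "conv (\<lambda>k. a k + a' k) b n = conv a b n + conv a' b n"
  by (simp add: conv_def sum.distrib algebra_simps)

lemma conv_add2: "conv a (\<lambda>k. b k + b' k) n = conv a b n + conv a b' n"
  by (simp add: conv_def sum.distrib algebra_simps)

lemma conv_Suc: "conv a b (Suc n) = conv (\<lambda>k. a (Suc k)) b n + conv a (\<lambda>k. b (Suc k)) n"
proof -
  have "conv a b (Suc n) = a (Suc n) * b 0 +
     (\<Sum>j\<le>n. of_nat (Suc n choose Suc j) * a (n - j) * b (Suc j))"
    unfolding conv_def by (subst sum.atMost_Suc_shift) simp
  also have "(\<Sum>j\<le>n. of_nat (Suc n choose Suc j) * a (n - j) * b (Suc j)) =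
     (\<Sum>j\<le>n. of_nat (n choose j) * a (n - j) * b (Suc j)) +
     (\<Sum>j\<le>n. of_nat (n choose Suc j) * a (n - j) * b (Suc j))"
    by (simp add: sum.distrib algebra_simps)
  also have "(\<Sum>j\<le>n. of_nat (n choose Suc j) * a (n - j) * b (Suc j)) =
     (\<Sum>j<n. of_nat (n choose Suc j) * a (n - j) * b (Suc j))"
    by (simp add: lessThan_Suc_atMost[symmetric] binomial_eq_0)
  also have "conv (\<lambda>k. a (Suc k)) b n = a (Suc n) * b 0 +
     (\<Sum>j<n. of_nat (n choose Suc j) * a (n - j) * b (Suc j))"
    unfolding conv_def
    by (subst sum.atMost_shift) (auto intro!: sum.cong simp: Suc_diff_Suc)
  ultimately show ?thesis by (simp add: conv_def algebra_simps)
qed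

lemma conv_T1: "conv (\<lambda>k. of_nat k * a (k - 1)) b n = of_nat n * conv a b (n - 1)"
proof (cases n)
  case 0 then show ?thesis by (simp add: conv_def)
next
  case (Suc m)
  have "conv a b m = (\<Sum>j\<le>Suc m. of_nat (m choose j) * a (m - j) * b j)"
    by (simp add: conv_def binomial_eq_0)
  then have "of_nat n * conv a b (n - 1) =
     (\<Sum>j\<le>Suc m. of_nat (Suc m) * of_nat (m choose j) * a (m - j) * b j)"
    using Suc by (simp add: sum_distrib_left algebra_simps)
  also have "\<dots> = (\<Sum>j\<le>Suc m. of_nat (Suc m choose j) * (of_nat (Suc m - j) * a (Suc m - j - 1)) * b j)"
  proof (intro sum.cong refl)
    fix j assume "j \<in> {..Suc m}"
    have e: "(Suc m - j) * (Suc m choose j) = Suc m * (m choose j)"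
      using binomial_absorb_comp[of "Suc m" j] by simp
    have "of_nat (Suc m) * of_nat (m choose j) = (of_nat (Suc m - j) * of_nat (Suc m choose j) :: 'a)"
      by (metis e of_nat_mult)
    moreover have "Suc m - j - 1 = m - j" by simp
    ultimately show "of_nat (Suc m) * of_nat (m choose j) * a (m - j) * b j =
      of_nat (Suc m choose j) * (of_nat (Suc m - j) * a (Suc m - j - 1)) * b j"
      by (simp add: algebra_simps)
  qed
  finally show ?thesis using Suc by (simp add: conv_def)
qed

lemma conv_T2: "conv a (\<lambda>k. of_nat k * b (k - 1)) n = of_nat n * conv a b (n - 1)"
  by (subst conv_comm, subst conv_T1, subst conv_comm, rule refl)

lemma key_identity:
  fixes X Y c :: "'a::comm_ring_1"
  shows "conv (ff (X+1)) (\<lambda>k. c^k * ff (Y+1) k) (Suc m) =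
    ((X+1) + c*(Y+1)) * conv (ff X) (\<lambda>k. c^k * ff Y k) m
    + c*((X+1)+(Y+1)) * of_nat m * conv (ff X) (\<lambda>k. c^k * ff Y k) (m - 1)"
proof -
  let ?Q = "\<lambda>k. c^k * ff Y k"
  let ?F = "conv (ff X) ?Q"
  have d1: "(\<lambda>k. ff (X+1) (Suc k)) = (\<lambda>k. (X+1) * ff X k)"
    by (simp add: ff_Suc)
  have d2: "(\<lambda>k. c^Suc k * ff (Y+1) (Suc k)) = (\<lambda>k. (c*(Y+1)) * ?Q k)"
    by (simp add: ff_Suc algebra_simps)
  have q: "(\<lambda>k. c^k * ff (Y+1) k) = (\<lambda>k. ?Q k + c * (of_nat k * ?Q (k - 1)))"
  proof
    fix k show "c^k * ff (Y+1) k = ?Q k + c * (of_nat k * ?Q (k - 1))"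
      by (subst ff_plus1, cases k) (simp_all add: algebra_simps)
  qed
  have p: "ff (X+1) = (\<lambda>k. ff X k + of_nat k * ff X (k - 1))"
    by (rule ext) (simp add: ff_plus1)
  have "conv (ff (X+1)) (\<lambda>k. c^k * ff (Y+1) k) (Suc m) =
     (X+1) * conv (ff X) (\<lambda>k. c^k * ff (Y+1) k) m + (c*(Y+1)) * conv (ff (X+1)) ?Q m"
    by (simp only: conv_Suc d1 d2 conv_smult1 conv_smult2)
  also have "conv (ff X) (\<lambda>k. c^k * ff (Y+1) k) m = ?F m + c * (of_nat m * ?F (m - 1))"
    using conv_T2[of "ff X" ?Q m] by (simp only: q conv_add2 conv_smult2)
  also have "conv (ff (X+1)) ?Q m = ?F m + of_nat m * ?F (m - 1)"
    using conv_T1[of "ff X" ?Q m] by (simp only: p conv_add1)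
  finally show ?thesis by (simp add: algebra_simps)
qed

lemma prod_of_nat_UNIV:
  "(\<Prod>i<CARD('p::prime_card). g (of_nat i :: 'p mod_ring)) = (\<Prod>y\<in>UNIV. g y)"
proof -
  have im: "(of_nat :: nat \<Rightarrow> 'p mod_ring) ` {..<CARD('p)} = UNIV"
    using surj_of_nat_mod_ring by fastforce
  have "inj_on (of_nat :: nat \<Rightarrow> 'p mod_ring) {..<CARD('p)}"
    by (rule eq_card_imp_inj_on) (simp_all add: im)
  from prod.reindex[OF this, of g] im show ?thesis by simp
qed

lemma ff_scaled:
  fixes R :: "'p::prime_card mod_ring"
  assumes "R \<noteq> 0"
  shows "ff (smult R [:0,1:]) CARD('p) = [:R:] * (\<Prod>y\<in>UNIV. [:0,1:] - [:y:])"
proof -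
  have "ff (smult R [:0,1:]) CARD('p) = (\<Prod>i<CARD('p). smult R [:0,1:] - [:of_nat i:])"
    by (simp add: ff_def of_nat_poly)
  also have "\<dots> = (\<Prod>y\<in>UNIV. smult R [:0,1:] - [:y:])"
    by (rule prod_of_nat_UNIV)
  also have "\<dots> = (\<Prod>y\<in>UNIV. [:R:] * ([:0,1:] - [:y / R:]))"
    using assms by (intro prod.cong refl) (simp add: algebra_simps poly_eq_iff coeff_pCons split: nat.split)
  also have "\<dots> = [:R:] ^ card (UNIV :: 'p mod_ring set) * (\<Prod>y\<in>UNIV. [:0,1:] - [:y / R:])"
    by (subst prod.distrib) (simp only: prod_constant)
  also have "(\<Prod>y\<in>UNIV. [:0,1:] - [:y / R:]) = (\<Prod>y\<in>UNIV. [:0,1:] - [:y:])"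
    using assms
    by (intro prod.reindex_bij_witness[where i="\<lambda>y. y * R" and j="\<lambda>y. y / R"]) auto
  also have "[:R:] ^ card (UNIV :: 'p mod_ring set) = [:R:]"
    by (simp add: poly_const_pow)
  finally show ?thesis .
qed

lemma of_nat_mod_ring_nz:
  assumes "\<not> CARD('p::prime_card) dvd n"
  shows "(of_nat n :: 'p mod_ring) \<noteq> 0"
  using assms of_nat_0_mod_ring_dvd by blast

lemma of_nat_mod_ring_z:
  assumes "CARD('p::prime_card) dvd n"
  shows "(of_nat n :: 'p mod_ring) = 0"
proof -
  from assms obtain k where "n = CARD('p) * k" by blast
  then show ?thesis by simp
qed

lemma fact_nz:
  assumes "k < CARD('p::prime_card)"
  shows "(of_nat (fact k) :: 'p mod_ring) \<noteq> 0"
  using assms prime_dvd_fact_iff[OF prime_card[where 'a='p], of k]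
  by (intro of_nat_mod_ring_nz) auto

lemma pbinom_ff: "pbinom Z k = smult (inverse (of_nat (fact k))) (ff Z k)"
  by (simp add: pbinom_def ff_def)

lemma pbinom_plus1:
  fixes Z :: "'p::prime_card mod_ring poly"
  assumes "k < CARD('p)"
  shows "pbinom (Z + 1) k = pbinom Z k + (if k = 0 then 0 else pbinom Z (k - 1))"
proof (cases k)
  case 0 then show ?thesis by (simp add: pbinom_ff)
next
  case (Suc j)
  have nz: "(of_nat (Suc j) :: 'p mod_ring) \<noteq> 0"
    using assms Suc by (intro of_nat_mod_ring_nz) (auto dest: dvd_imp_le)
  have nz2: "(of_nat (fact j) :: 'p mod_ring) \<noteq> 0" using assms Suc fact_nz[of j, where 'p='p] by simp
  have "pbinom (Z + 1) k = pbinom Z k + smult (inverse (of_nat (fact (Suc j)))) (of_nat (Suc j) * ff Z j)"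
    using Suc by (simp add: pbinom_ff ff_plus1 smult_add_right)
  also have "smult (inverse (of_nat (fact (Suc j)))) (of_nat (Suc j) * ff Z j) = pbinom Z j"
  proof -
    have f: "(of_nat (fact (Suc j)) :: 'p mod_ring) = of_nat (Suc j) * of_nat (fact j)"
      by (simp only: fact_Suc of_nat_mult of_nat_id)
    have c: "inverse (of_nat (fact (Suc j)) :: 'p mod_ring) * of_nat (Suc j) = inverse (of_nat (fact j))"
      unfolding f using nz nz2 by (simp del: of_nat_Suc)
    have "smult (inverse (of_nat (fact (Suc j)))) (of_nat (Suc j) * ff Z j)
        = smult (inverse (of_nat (fact (Suc j))) * of_nat (Suc j)) (ff Z j)"
      by (simp only: of_nat_poly[of "Suc j"]) simp
    then show ?thesis unfolding c pbinom_ff .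
  qed
  finally show ?thesis using Suc by simp
qed

lemma conv_at_p:
  fixes U V c :: "'p::prime_card mod_ring poly"
  shows "conv (ff U) (\<lambda>k. c^k * ff V k) CARD('p) = ff U CARD('p) + c ^ CARD('p) * ff V CARD('p)"
proof -
  let ?p = "CARD('p)"
  let ?g = "\<lambda>j. of_nat (?p choose j) * ff U (?p - j) * (c ^ j * ff V j)"
  have p0: "?p \<noteq> 0" by simp
  have "conv (ff U) (\<lambda>k. c^k * ff V k) ?p = sum ?g {..?p}" by (simp add: conv_def)
  also have "\<dots> = sum ?g {0, ?p}"
  proof (rule sum.mono_neutral_right)
    show "\<forall>i\<in>{..?p} - {0, ?p}. ?g i = 0"
    proof
      fix i assume i: "i \<in> {..?p} - {0, ?p}"
      have "?p dvd (?p choose i)"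
        using i by (intro dvd_choose_prime) (auto simp: prime_card)
      then have "(of_nat (?p choose i) :: 'p mod_ring) = 0" by (rule of_nat_mod_ring_z)
      then have "(of_nat (?p choose i) :: 'p mod_ring poly) = 0" by (simp add: of_nat_poly)
      then show "?g i = 0" by simp
    qed
  qed auto
  also have "\<dots> = ff U ?p + c ^ ?p * ff V ?p" using p0 by simp
  finally show ?thesis .
qed

lemma smult_sum2: "smult a (sum f A) = (\<Sum>i\<in>A. smult a (f i))"
  by (induction A rule: infinite_finite_induct) (simp_all add: smult_add_right)

lemma termwise:
  fixes X Y :: "'p::prime_card mod_ring poly"
  assumes "n < CARD('p)" "j \<le> n"
  shows "[:C^j:] * pbinom X (n - j) * pbinom Y j =
    smult (inverse (of_nat (fact n))) (of_nat (n choose j) * ff X (n - j) * ([:C:]^j * ff Y j))"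
proof -
  define a where "a = (of_nat (fact j) :: 'p mod_ring)"
  define b where "b = (of_nat (fact (n - j)) :: 'p mod_ring)"
  define m where "m = (of_nat (n choose j) :: 'p mod_ring)"
  define f where "f = (of_nat (fact n) :: 'p mod_ring)"
  have fab: "f = a * b * m" unfolding a_def b_def m_def f_def
    using binomial_fact_lemma[OF assms(2)] by (metis of_nat_mult)
  have fnz: "f \<noteq> 0" unfolding f_def using fact_nz assms(1) by blast
  then have nz: "a \<noteq> 0" "b \<noteq> 0" "m \<noteq> 0" using fab by auto
  have co: "C^j * inverse b * inverse a = inverse f * m * C^j"
    using nz unfolding fab by (simp add: field_simps)
  have "[:C^j:] * pbinom X (n - j) * pbinom Y j = smult (C^j * inverse b * inverse a) (ff X (n - j) * ff Y j)"
    unfolding pbinom_ff b_def a_def by (simp add: ac_simps)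
  also have "\<dots> = smult (inverse f * m * C^j) (ff X (n - j) * ff Y j)" by (simp only: co)
  also have "\<dots> = smult (inverse (of_nat (fact n))) (of_nat (n choose j) * ff X (n - j) * ([:C:]^j * ff Y j))"
    unfolding f_def m_def by (simp add: of_nat_poly[of "n choose j"] poly_const_pow ac_simps)
  finally show ?thesis .
qed

theorem lemma17:
  fixes r s :: nat
  assumes "odd (CARD('p::prime_card))"
    and "0 < r" and "r < CARD('p)" and "0 < s" and "s < CARD('p)"
    and "r + s \<noteq> CARD('p)"
  shows "(b_rs r s :: 'p mod_ring poly) =
    (\<Sum>k = 0..CARD('p) - 1.
      [:(- (of_nat r / of_nat s)) ^ k:]
      * pbinom (smult (of_nat r) [:0, 1:] - 1) (CARD('p) - 1 - k)
      * pbinom (smult (of_nat s) [:0, 1:]) k)"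
proof -
  let ?p = "CARD('p)"
  define R where "R = (of_nat r :: 'p mod_ring)"
  define S where "S = (of_nat s :: 'p mod_ring)"
  define C where "C = - (R / S)"
  define X where "X = smult R [:0,1:] - 1"
  define Y where "Y = smult S [:0,1:] - 1"
  define F where "F = conv (ff X) (\<lambda>k. [:C:]^k * ff Y k)"
  have p2: "?p \<ge> 2" using prime_card[where 'a='p] prime_ge_2_nat by blast
  have Rnz: "R \<noteq> 0" unfolding R_def using assms by (intro of_nat_mod_ring_nz) (auto dest: dvd_imp_le)
  have Snz: "S \<noteq> 0" unfolding S_def using assms by (intro of_nat_mod_ring_nz) (auto dest: dvd_imp_le)
  have RSnz: "R + S \<noteq> 0"
  proof -
    have "\<not> ?p dvd (r + s)"
    proof
      assume "?p dvd (r + s)"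
      then obtain k where k: "r + s = ?p * k" by blast
      have "?p * k < ?p * 2" using k assms by linarith
      then have "k < 2" by simp
      moreover have "k \<noteq> 0" proof assume "k = 0" then show False using k assms by simp qed
      ultimately have "k = 1" by linarith
      then show False using k assms by simp
    qed
    then have "(of_nat (r + s) :: 'p mod_ring) \<noteq> 0" by (rule of_nat_mod_ring_nz)
    then show ?thesis by (simp add: R_def S_def)
  qed
  have Cnz: "C \<noteq> 0" using Rnz Snz by (simp add: C_def)
  have CS: "R + C * S = 0" using Snz by (simp add: C_def)
  have Cp: "C ^ ?p = C" using fermat_theorem_mod_ring[of C] by simp
  have X1: "X + 1 = smult R [:0,1:]" by (simp add: X_def)
  have Y1: "Y + 1 = smult S [:0,1:]" by (simp add: Y_def)
  define PP where "PP = (\<Prod>y\<in>UNIV. [:0,1:] - [:y::'p mod_ring:])"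
  have zero: "conv (ff (X+1)) (\<lambda>k. [:C:]^k * ff (Y+1) k) ?p = 0"
  proof -
    have "conv (ff (X+1)) (\<lambda>k. [:C:]^k * ff (Y+1) k) ?p = [:R:] * PP + [:C^?p:] * ([:S:] * PP)"
      apply (subst conv_at_p)
      unfolding X1 Y1 ff_scaled[OF Rnz] ff_scaled[OF Snz] PP_def poly_const_pow ..
    also have "\<dots> = smult (R + C * S) PP" unfolding Cp by (simp add: smult_add_left mult.commute)
    finally show ?thesis using CS by simp
  qed
  have psuc: "?p = Suc (?p - 1)" using p2 by simp
  have lin0: "X + 1 + [:C:] * (Y + 1) = 0"
    unfolding X1 Y1 using CS by (simp add: mult.commute flip: smult_add_left)
  have sum2: "X + 1 + (Y + 1) = smult (R + S) [:0,1:]"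
    unfolding X1 Y1 by (simp add: smult_add_left)
  have "0 = [:C:] * (X + 1 + (Y + 1)) * of_nat (?p - 1) * F (?p - 1 - 1)"
  proof -
    have K: "conv (ff (X+1)) (\<lambda>k. [:C:]^k * ff (Y+1) k) (Suc (?p - 1)) =
      (X + 1 + [:C:] * (Y + 1)) * F (?p - 1) + [:C:] * (X + 1 + (Y + 1)) * of_nat (?p - 1) * F (?p - 1 - 1)"
      unfolding F_def by (rule key_identity)
    show ?thesis using K unfolding psuc[symmetric] zero lin0 by simp
  qed
  moreover have "(of_nat (?p - 1) :: 'p mod_ring poly) \<noteq> 0"
  proof -
    have "\<not> ?p dvd (?p - 1)" using p2 by (auto dest: dvd_imp_le)
    then have "(of_nat (?p - 1) :: 'p mod_ring) \<noteq> 0" by (rule of_nat_mod_ring_nz)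
    then show ?thesis by (simp add: of_nat_poly)
  qed
  ultimately have F0: "F (?p - 2) = 0" using Cnz RSnz unfolding sum2 by (simp add: numeral_2_eq_2)
  define n where "n = ?p - 2"
  have N: "?p - 1 = Suc n" using p2 unfolding n_def by simp
  have nlt: "n < ?p" using p2 unfolding n_def by simp
  have inner: "(\<Sum>j=0..n. [:C^j:] * pbinom X (n - j) * pbinom Y j) = smult (inverse (of_nat (fact n))) (F n)"
    unfolding F_def conv_def smult_sum2 atLeast0AtMost
    by (intro sum.cong refl termwise) (use nlt in auto)
  have extra: "(\<Sum>k=0..?p - 1. [:C^k:] * pbinom X (?p - 1 - k) * (if k = 0 then 0 else pbinom Y (k - 1))) = 0"
  proof -
    have "(\<Sum>k=0..?p - 1. [:C^k:] * pbinom X (?p - 1 - k) * (if k = 0 then 0 else pbinom Y (k - 1)))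
       = (\<Sum>j=0..n. [:C^Suc j:] * pbinom X (n - j) * pbinom Y j)"
      unfolding N by (subst sum.atLeast0_atMost_Suc_shift) simp
    also have "\<dots> = [:C:] * (\<Sum>j=0..n. [:C^j:] * pbinom X (n - j) * pbinom Y j)"
      by (simp add: sum_distrib_left ac_simps)
    also have "\<dots> = 0" unfolding inner using F0 by (simp add: n_def)
    finally show ?thesis .
  qed
  have rhs: "(\<Sum>k = 0..?p - 1. [:(- (of_nat r / of_nat s)) ^ k:]
      * pbinom (smult (of_nat r) [:0, 1:] - 1) (?p - 1 - k)
      * pbinom (smult (of_nat s) [:0, 1:]) k)
    = (\<Sum>k = 0..?p - 1. [:C^k:] * pbinom X (?p - 1 - k) * pbinom Y k)
      + (\<Sum>k=0..?p - 1. [:C^k:] * pbinom X (?p - 1 - k) * (if k = 0 then 0 else pbinom Y (k - 1)))"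
    unfolding sum.distrib[symmetric]
  proof (intro sum.cong refl)
    fix k assume k: "k \<in> {0..?p - 1}"
    then have "k < ?p" using p2 by auto
    then have pb: "pbinom (smult (of_nat s) [:0, 1:]) k = pbinom Y k + (if k = 0 then 0 else pbinom Y (k - 1))"
      using pbinom_plus1[of k Y] Y1 unfolding S_def by simp
    then show "[:(- (of_nat r / of_nat s)) ^ k:] * pbinom (smult (of_nat r) [:0, 1:] - 1) (?p - 1 - k)
      * pbinom (smult (of_nat s) [:0, 1:]) k =
      [:C^k:] * pbinom X (?p - 1 - k) * pbinom Y k +
      [:C^k:] * pbinom X (?p - 1 - k) * (if k = 0 then 0 else pbinom Y (k - 1))"
      by (simp only: pb) (simp add: C_def R_def S_def X_def algebra_simps smult_add_right)
  qed
  show ?thesis unfolding rhs extra b_rs_def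
    by (simp add: C_def R_def S_def X_def Y_def)
qed

end
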